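(* Let $\kappa$ be a constant and $q_1,q_2,t_1,t_2,v$ indeterminates. Let $V_0(q_1,q_2,t_1,t_2)$ be the coefficient of $z^0$ in $$V(z;q_1,t_1,q_2,t_2)=\exp\Big(\sum_{k\ge1}(q_1^k-q_2^k)\mathfrak a_{-k}\frac{z^k}{k}\Big)\exp\Big(\sum_{k\ge1}(t_2^k-t_1^k)\mathfrak a_k\frac{z^{-k}}{k}\Big).$$ Then $$\big\langle V_0(q_1,q_2,t_1,t_2)\big\rangle_v=\left[\frac{(q_1t_1v)_\infty\,(q_2t_2v)_\infty}{(q_1t_2v)_\infty\,(q_2t_1v)_\infty}\right]^{\kappa}.$$
   Context: The Heisenberg algebra is generated by a central element $\mathrm I$ and $\mathfrak a_n$, $n\in\mathbb Z$, with $[\mathfrak a_m,\mathfrak a_n]=\kappa m\delta_{m,-n}\mathrm I$. The Fock space $B$ is the irreducible representation generated by a vector $|0\rangle$ with $\mathrm I|0\rangle=|0\rangle$, $\mathfrak a_n|0\rangle=0$ for $n\ge0$; it has basis $\mathfrak a_{-\lambda}=\mathfrak a_{-\lambda_1}\mathfrak a_{-\lambda_2}\cdots|0\rangle$ over partitions $\lambda$. The energy operator $L_0$ acts on $\mathfrak a_{-\lambda}$ by multiplication by $|\lambda|$. For an operator $\Delta$ on $B$ preserving degree, $\langle \Delta\rangle_v:=(v)_\infty\,\mathrm{Tr}_B(v^{L_0}\Delta)$, a formal power series in $v$. Notation: $(a)_\infty=\prod_{i\ge0}(1-av^i)$, and $[\,\cdot\,]^\kappa$ is $\exp(\kappa\log(\cdot))$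 with the logarithm expanded as a formal power series. *)

theory Defs
  imports Complex_Main "HOL-Library.Multiset" "HOL-Computational_Algebra.Formal_Power_Series"
begin

text \<open>A vector of the Fock space B is
represented by its coefficient function with respect to the basis a_{-lambda}
(indexed by partitions). The basis vector a_{-lambda} is basis_vec lambda.\<close>

type_synonym fock = "nat multiset \<Rightarrow> complex"

definition is_partition :: "nat multiset \<Rightarrow> bool" where
  "is_partition p \<longleftrightarrow> 0 \<notin># p"

definition partitions_of :: "nat \<Rightarrow> nat multiset set" where
  "partitions_of d = {p. is_partition p \<and> sum_mset p = d}"

definition basis_vec :: "nat multiset \<Rightarrow> fock" where
  "basis_vec p = (\<lambda>\<mu>. if \<mu> = p then 1 else 0)"

text \<open>Creation operator a_{-k} (k >= 1): a_{-k} a_{-lambda} = a_{-(lambda + k)}.\<close>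
definition a_minus :: "nat \<Rightarrow> fock \<Rightarrow> fock" where
  "a_minus k f = (\<lambda>\<mu>. if k \<in># \<mu> then f (\<mu> - {#k#}) else 0)"

text \<open>Annihilation operator a_k (k >= 1): a_k a_{-lambda} = kappa k m_k(lambda) a_{-(lambda - k)},
which is forced by [a_m,a_n] = kappa m delta_{m,-n} I and a_k |0> = 0.\<close>
definition a_plus :: "complex \<Rightarrow> nat \<Rightarrow> fock \<Rightarrow> fock" where
  "a_plus \<kappa> k f = (\<lambda>\<mu>. \<kappa> * of_nat k * of_nat (count \<mu> k + 1) * f (\<mu> + {#k#}))"

definition scale_op :: "complex \<Rightarrow> (fock \<Rightarrow> fock) \<Rightarrow> fock \<Rightarrow> fock" where
  "scale_op c A f = (\<lambda>\<mu>. c * A f \<mu>)"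

definition sum_op :: "'i set \<Rightarrow> ('i \<Rightarrow> fock \<Rightarrow> fock) \<Rightarrow> fock \<Rightarrow> fock" where
  "sum_op I A f = (\<lambda>\<mu>. \<Sum>i\<in>I. A i f \<mu>)"

text \<open>Product X_{k_1} X_{k_2} ... X_{k_m} of operators (leftmost applied last).\<close>
definition prod_ops :: "(nat \<Rightarrow> fock \<Rightarrow> fock) \<Rightarrow> nat list \<Rightarrow> fock \<Rightarrow> fock" where
  "prod_ops X ks = foldr (\<lambda>k g. X k \<circ> g) ks id"

definition compositions :: "nat \<Rightarrow> nat \<Rightarrow> nat list set" where
  "compositions n m = {ks. length ks = m \<and> (\<forall>k\<in>set ks. 1 \<le> k) \<and> sum_list ks = n}"

text \<open>Coefficient of w^n in exp(sum_{k>=1} X_k w^k), for pairwise commuting operators X_k: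
  sum_m (1/m!) * (coefficient of w^n in (sum_k X_k w^k)^m).
  Only m <= n contribute (compositions of n into m positive parts).\<close>
definition exp_coeff :: "(nat \<Rightarrow> fock \<Rightarrow> fock) \<Rightarrow> nat \<Rightarrow> fock \<Rightarrow> fock" where
  "exp_coeff X n = sum_op {0..n}
     (\<lambda>m. scale_op (1 / of_nat (fact m)) (sum_op (compositions n m) (prod_ops X)))"

text \<open>E_-(z) = exp(sum (q1^k - q2^k) a_{-k} z^k / k): coefficient of z^n.\<close>
definition E_minus_coeff :: "complex \<Rightarrow> complex \<Rightarrow> nat \<Rightarrow> fock \<Rightarrow> fock" where
  "E_minus_coeff q1 q2 =
     exp_coeff (\<lambda>k. scale_op ((q1 ^ k - q2 ^ k) / of_nat k) (a_minus k))"

text \<open>E_+(z) = exp(sum (t2^k - t1^k) a_k z^{-k} / k): coefficient of z^{-n}.\<close>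
definition E_plus_coeff :: "complex \<Rightarrow> complex \<Rightarrow> complex \<Rightarrow> nat \<Rightarrow> fock \<Rightarrow> fock" where
  "E_plus_coeff \<kappa> t1 t2 =
     exp_coeff (\<lambda>k. scale_op ((t2 ^ k - t1 ^ k) / of_nat k) (a_plus \<kappa> k))"

text \<open>V_0 = coefficient of z^0 in V(z) = E_-(z) E_+(z), i.e. sum_n E_-[z^n] E_+[z^{-n}].
  The coefficient of a_{-mu} of E_-[z^n] g vanishes for n > |mu|, so the sum is finite
  pointwise; we sum over n = 0..|mu|.\<close>
definition V0 :: "complex \<Rightarrow> complex \<Rightarrow> complex \<Rightarrow> complex \<Rightarrow> complex \<Rightarrow> fock \<Rightarrow> fock" where
  "V0 \<kappa> q1 q2 t1 t2 f =
     (\<lambda>\<mu>. \<Sum>n\<in>{0..sum_mset \<mu>}. E_minus_coeff q1 q2 n (E_plus_coeff \<kappa> t1 t2 n f) \<mu>)"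

text \<open>Tr_B(v^{L_0} Delta) = sum_d v^d * Tr(Delta restricted to degree d).\<close>
definition graded_trace :: "(fock \<Rightarrow> fock) \<Rightarrow> complex fps" where
  "graded_trace \<Delta> = Abs_fps (\<lambda>d. \<Sum>p\<in>partitions_of d. \<Delta> (basis_vec p) p)"

text \<open>(c v)_infinity = prod_{i>=0} (1 - c v^{i+1}) as a formal power series in v;
  the coefficient of v^n is that of the finite product over i <= n.\<close>
definition qpoch_inf :: "complex \<Rightarrow> complex fps" where
  "qpoch_inf c = Abs_fps (\<lambda>n. fps_nth (\<Prod>i\<in>{0..n}. 1 - fps_const c * fps_X ^ (i + 1)) n)"

definition fock_expect :: "(fock \<Rightarrow> fock) \<Rightarrow> complex fps" where
  "fock_expect \<Delta> = qpoch_inf 1 * graded_trace \<Delta>"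

text \<open>[F]^kappa = exp(kappa log F) for F with constant term 1.\<close>
definition fps_pow_gen :: "complex fps \<Rightarrow> complex \<Rightarrow> complex fps" where
  "fps_pow_gen F \<kappa> = fps_exp \<kappa> oo (fps_ln 1 oo (F - 1))"

end

theory Submission
  imports Defs "HOL-Combinatorics.Multiset_Permutations"
begin


definition agree :: "nat \<Rightarrow> complex fps \<Rightarrow> complex fps \<Rightarrow> bool" where
  "agree n A B \<longleftrightarrow> (\<forall>j\<le>n. fps_nth (A) j = fps_nth (B) j)"

lemma agree_refl: "agree n A A" by (simp add: agree_def)
lemma agree_sym: "agree n A B \<Longrightarrow> agree n B A" by (simp add: agree_def)
lemma agree_trans: "agree n A B \<Longrightarrow> agree n B C \<Longrightarrow> agree n A C" by (simp add: agree_def)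
lemma agree_mono: "agree n A B \<Longrightarrow> m \<le> n \<Longrightarrow> agree m A B" by (simp add: agree_def)

lemma agree_mult: "agree n A B \<Longrightarrow> agree n C D \<Longrightarrow> agree n (A*C) (B*D)"
  unfolding agree_def fps_mult_nth by (auto intro!: sum.cong)

lemma agree_add: "agree n A B \<Longrightarrow> agree n C D \<Longrightarrow> agree n (A+C) (B+D)"
  unfolding agree_def by auto

lemma agree_deriv: "agree (Suc n) A B \<Longrightarrow> agree n (fps_deriv A) (fps_deriv B)"
  unfolding agree_def by (auto simp: fps_deriv_nth)

definition is_exp :: "complex fps \<Rightarrow> complex fps \<Rightarrow> bool" where
  "is_exp G H \<longleftrightarrow> fps_nth (G) 0 = 1 \<and> fps_nth (H) 0 = 0 \<and> fps_deriv G = G * fps_deriv H"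

lemma is_exp_uniq_G:
  assumes "is_exp G1 H" "is_exp G2 H" shows "G1 = G2"
proof -
  have "\<forall>j\<le>n. fps_nth (G1) j = fps_nth (G2) j" for n
  proof (induction n)
    case 0 then show ?case using assms by (simp add: is_exp_def)
  next
    case (Suc n)
    have "fps_nth (fps_deriv G1) n = fps_nth (fps_deriv G2) n"
      using assms Suc unfolding is_exp_def by (auto simp: fps_mult_nth intro!: sum.cong)
    then have "fps_nth G1 (Suc n) = fps_nth G2 (Suc n)"
      by (simp add: fps_deriv_nth del: of_nat_Suc)
    with Suc show ?case using le_Suc_eq by auto
  qed
  then show ?thesis by (auto simp: fps_eq_iff)
qed

lemma is_exp_uniq_H:
  assumes "is_exp G H1" "is_exp G H2" shows "H1 = H2"
proof -
  have G0: "G \<noteq> 0" using assms by (auto simp: is_exp_def)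
  have "G * fps_deriv H1 = G * fps_deriv H2" using assms by (simp add: is_exp_def)
  then have "fps_deriv H1 = fps_deriv H2" using G0 by simp
  then show ?thesis using assms by (simp add: fps_deriv_eq_iff is_exp_def)
qed

lemma is_exp_mult:
  assumes "is_exp G1 H1" "is_exp G2 H2" shows "is_exp (G1*G2) (H1+H2)"
  using assms unfolding is_exp_def by (simp add: fps_deriv_mult algebra_simps)

lemma is_exp_one: "is_exp 1 0" by (simp add: is_exp_def)

lemma is_exp_inverse:
  assumes "is_exp G H" shows "is_exp (inverse G) (- H)"
proof -
  have G0: "fps_nth (G) 0 = 1" using assms by (simp add: is_exp_def)
  have "fps_deriv (inverse G) = - fps_deriv G * (inverse G)\<^sup>2"
    using G0 by (simp add: fps_inverse_deriv)
  also have "\<dots> = - (G * inverse G) * fps_deriv H * inverse G"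
    using assms by (simp add: is_exp_def power2_eq_square algebra_simps)
  also have "G * inverse G = 1" using G0 by (simp add: inverse_mult_eq_1')
  finally show ?thesis using assms G0 by (simp add: is_exp_def algebra_simps)
qed

lemma is_exp_prod:
  assumes "finite I" "\<And>i. i \<in> I \<Longrightarrow> is_exp (g i) (h i)"
  shows "is_exp (\<Prod>i\<in>I. g i) (\<Sum>i\<in>I. h i)"
  using assms by (induction I rule: finite_induct) (auto simp: is_exp_one is_exp_mult)

lemma is_exp_exp:
  assumes "fps_nth (H) 0 = 0" shows "is_exp (fps_exp c oo H) (fps_const c * H)"
proof -
  have "fps_deriv (fps_exp c oo H) = (fps_const c * fps_exp c oo H) * fps_deriv H"
    using assms by (simp add: fps_compose_deriv)
  also have "(fps_const c * fps_exp c oo H) = fps_const c * (fps_exp c oo H)"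
    by (simp add: fps_const_mult_apply_left)
  finally show ?thesis using assms by (simp add: is_exp_def algebra_simps)
qed

lemma is_exp_compose:
  assumes "is_exp G H" "fps_nth (K) 0 = 0" shows "is_exp (G oo K) (H oo K)"
  using assms unfolding is_exp_def
  by (simp add: fps_compose_deriv fps_compose_mult_distrib algebra_simps)

lemma is_exp_ln:
  assumes "fps_nth (F) 0 = 1" shows "is_exp F (fps_ln 1 oo (F - 1))"
proof -
  have K0: "fps_nth ((F - 1)) 0 = 0" using assms by simp
  have "fps_deriv (fps_ln 1 oo (F - 1)) = (inverse (1 + fps_X) oo (F - 1)) * fps_deriv F"
    using K0 by (simp add: fps_compose_deriv fps_ln_deriv)
  also have "inverse (1 + fps_X) oo (F - 1) = inverse ((1 + fps_X) oo (F - 1))"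
    using K0 by (intro fps_inverse_compose) auto
  also have "(1 + fps_X) oo (F - 1) = F"
    using K0 by (simp add: fps_compose_add_distrib)
  finally have "fps_deriv (fps_ln 1 oo (F - 1)) = inverse F * fps_deriv F" .
  then have "F * fps_deriv (fps_ln 1 oo (F - 1)) = (F * inverse F) * fps_deriv F"
    by (simp add: algebra_simps)
  also have "F * inverse F = 1" using assms by (simp add: inverse_mult_eq_1')
  finally show ?thesis using assms by (simp add: is_exp_def fps_ln_def)
qed

definition Pinf :: "(nat \<Rightarrow> complex fps) \<Rightarrow> complex fps" where
  "Pinf g = Abs_fps (\<lambda>n. fps_nth ((\<Prod>i\<in>{0..n}. g i)) n)"

definition Sinf :: "(nat \<Rightarrow> complex fps) \<Rightarrow> complex fps" where
  "Sinf h = Abs_fps (\<lambda>n. fps_nth ((\<Sum>i\<in>{0..n}. h i)) n)"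

lemma agree_prod_trunc:
  assumes "\<And>i j. 0 < j \<Longrightarrow> j \<le> i \<Longrightarrow> fps_nth (g i) j = 0" "\<And>i. fps_nth (g i) 0 = 1" "n \<le> N"
  shows "agree n (\<Prod>i\<in>{0..N}. g i) (\<Prod>i\<in>{0..n}. g i)"
  using assms(3)
proof (induction N rule: dec_induct)
  case base then show ?case by (rule agree_refl)
next
  case (step M)
  have "agree n (g (Suc M)) 1"
    unfolding agree_def using assms(1,2) step.hyps by (auto simp: fps_one_nth)
  from agree_mult[OF this step.IH] show ?case
    by (simp add: prod.atLeast0_atMost_Suc mult.commute)
qed

lemma agree_sum_trunc:
  assumes "\<And>i j. j \<le> i \<Longrightarrow> fps_nth (h i) j = 0" "n \<le> N"
  shows "agree n (\<Sum>i\<in>{0..N}. h i) (\<Sum>i\<in>{0..n}. h i)"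
  using assms(2)
proof (induction N rule: dec_induct)
  case base then show ?case by (rule agree_refl)
next
  case (step M)
  have "agree n (h (Suc M)) 0"
    unfolding agree_def using assms(1) step.hyps by auto
  from agree_add[OF this step.IH] show ?case
    by (simp add: sum.atLeast0_atMost_Suc add.commute)
qed

lemma agree_Pinf:
  assumes "\<And>i j. 0 < j \<Longrightarrow> j \<le> i \<Longrightarrow> fps_nth (g i) j = 0" "\<And>i. fps_nth (g i) 0 = 1" "n \<le> N"
  shows "agree n (Pinf g) (\<Prod>i\<in>{0..N}. g i)"
  unfolding agree_def Pinf_def
proof (intro allI impI)
  fix j assume j: "j \<le> n"
  have "agree j (\<Prod>i\<in>{0..N}. g i) (\<Prod>i\<in>{0..j}. g i)"
    using assms j by (intro agree_prod_trunc) auto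
  then show "fps_nth (Abs_fps (\<lambda>n. fps_nth (prod g {0..n}) n)) j = fps_nth (prod g {0..N}) j"
    by (simp add: agree_def)
qed

lemma agree_Sinf:
  assumes "\<And>i j. j \<le> i \<Longrightarrow> fps_nth (h i) j = 0" "n \<le> N"
  shows "agree n (Sinf h) (\<Sum>i\<in>{0..N}. h i)"
  unfolding agree_def Sinf_def
proof (intro allI impI)
  fix j assume j: "j \<le> n"
  have "agree j (\<Sum>i\<in>{0..N}. h i) (\<Sum>i\<in>{0..j}. h i)"
    using assms j by (intro agree_sum_trunc) auto
  then show "fps_nth (Abs_fps (\<lambda>n. fps_nth (sum h {0..n}) n)) j = fps_nth (sum h {0..N}) j"
    by (simp add: agree_def)
qed

lemma is_exp_Pinf:
  assumes "\<And>i j. 0 < j \<Longrightarrow> j \<le> i \<Longrightarrow> fps_nth (g i) j = 0"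
    and "\<And>i j. j \<le> i \<Longrightarrow> fps_nth (h i) j = 0"
    and "\<And>i. is_exp (g i) (h i)"
  shows "is_exp (Pinf g) (Sinf h)"
proof -
  have g0: "fps_nth (g i) 0 = 1" for i using assms(3) by (simp add: is_exp_def)
  have "fps_nth (fps_deriv (Pinf g)) n = fps_nth (Pinf g * fps_deriv (Sinf h)) n" for n
  proof -
    let ?P = "\<Prod>i\<in>{0..Suc n}. g i" and ?S = "\<Sum>i\<in>{0..Suc n}. h i"
    have e: "is_exp ?P ?S" using assms(3) by (intro is_exp_prod) auto
    have a1: "agree (Suc n) (Pinf g) ?P" using assms(1) g0 by (intro agree_Pinf) auto
    have a2: "agree (Suc n) (Sinf h) ?S" using assms(2) by (intro agree_Sinf) auto
    have "agree n (fps_deriv (Pinf g)) (fps_deriv ?P)" by (rule agree_deriv[OF a1])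
    moreover have "agree n (Pinf g * fps_deriv (Sinf h)) (?P * fps_deriv ?S)"
      by (intro agree_mult agree_deriv a2 agree_mono[OF a1]) auto
    moreover have "fps_deriv ?P = ?P * fps_deriv ?S" using e by (simp add: is_exp_def)
    ultimately show ?thesis unfolding agree_def by (metis order_refl)
  qed
  moreover have "fps_nth (Pinf g) 0 = 1" by (simp add: Pinf_def g0)
  moreover have "fps_nth (Sinf h) 0 = 0" using assms(2) by (simp add: Sinf_def)
  ultimately show ?thesis by (simp add: is_exp_def fps_eq_iff)
qed



lemma compose_Xpow_nth:
  assumes "0 < m"
  shows "fps_nth (a oo fps_X ^ m) n = (if m dvd n then fps_nth a (n div m) else (0::complex))"
proof -
  have "fps_nth (a oo fps_X ^ m) n = (\<Sum>i\<in>{0..n}. fps_nth a i * (if n = m * i then 1 else 0))"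
    by (simp add: fps_compose_nth power_mult[symmetric])
  also have "\<dots> = (\<Sum>i\<in>{0..n}. if i = n div m \<and> m dvd n then fps_nth a i else 0)"
    using assms by (intro sum.cong) (auto simp: mult.commute)
  also have "\<dots> = (if m dvd n then fps_nth a (n div m) else 0)"
  proof (cases "m dvd n")
    case True
    have "n div m \<le> n" by simp
    with True show ?thesis by (simp add: sum.delta')
  qed simp
  finally show ?thesis .
qed

definition L :: "complex \<Rightarrow> complex fps" where
  "L c = Abs_fps (\<lambda>n. if n = 0 then 0 else - (c ^ n) / of_nat n)"

lemma is_exp_L: "is_exp (1 - fps_const c * fps_X) (L c)"
proof -
  have dL: "fps_deriv (L c) = Abs_fps (\<lambda>n. - (c ^ Suc n))"
    by (simp add: fps_eq_iff L_def fps_deriv_nth del: of_nat_Suc)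
  have pw: "\<And>n. 0 < n \<Longrightarrow> c ^ n = c * c ^ (n - Suc 0)" by (case_tac n) auto
  have "(1 - fps_const c * fps_X) * fps_deriv (L c) = - fps_const c"
    unfolding dL
    using pw by (auto simp: fps_eq_iff algebra_simps)
  then show ?thesis
    by (simp add: is_exp_def L_def)
qed

definition G1 :: "complex fps" where "G1 = Abs_fps (\<lambda>n. 1)"
definition K1 :: "complex fps" where "K1 = fps_X * G1"

lemma G1_inv: "G1 = inverse (1 - fps_X)"
proof -
  have "inverse G1 = 1 - fps_X" using fps_inverse_gp'[where 'a=complex] by (simp add: G1_def)
  then have "inverse (inverse G1) = inverse (1 - fps_X)" by simp
  then show ?thesis by (simp add: fps_inverse_idempotent G1_def)
qed

lemma is_exp_G1: "is_exp G1 (- L 1)"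
  using is_exp_inverse[OF is_exp_L[of 1]] by (simp add: G1_inv)

lemma K1_0: "fps_nth K1 0 = 0" by (simp add: K1_def)

lemma mult_G1_nth: "fps_nth (F * G1) n = (\<Sum>j\<in>{0..n}. fps_nth F j)"
  by (simp add: fps_mult_nth G1_def)

lemma K1_pow_G1_nth: "fps_nth (K1 ^ i * G1) n = of_nat (n choose i)"
proof (induction i arbitrary: n)
  case 0 then show ?case by (simp add: G1_def)
next
  case (Suc i)
  have "K1 ^ Suc i * G1 = fps_X * ((K1 ^ i * G1) * G1)"
    by (simp add: K1_def algebra_simps)
  then have "fps_nth (K1 ^ Suc i * G1) n = (if n = 0 then 0 else fps_nth ((K1 ^ i * G1) * G1) (n-1))"
    by (simp only: fps_X_mult_nth)
  also have "\<dots> = (if n = 0 then 0 else \<Sum>j\<in>{0..n-1}. fps_nth (K1 ^ i * G1) j)"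
    by (simp only: mult_G1_nth[of "K1 ^ i * G1"])
  finally have e: "fps_nth (K1 ^ Suc i * G1) n = (if n = 0 then 0 else \<Sum>j\<in>{0..n-1}. of_nat (j choose i))"
    by (simp add: Suc.IH)
  show ?case
  proof (cases n)
    case 0 then show ?thesis using e by simp
  next
    case (Suc m)
    have "(\<Sum>j\<in>{0..m}. (of_nat (j choose i)::complex)) = of_nat (\<Sum>j\<le>m. j choose i)"
      by (simp add: atLeast0AtMost)
    also have "\<dots> = of_nat (Suc m choose Suc i)" by (simp add: sum_choose_upper)
    finally show ?thesis using e Suc by simp
  qed
qed

definition Q :: "complex \<Rightarrow> complex fps" where
  "Q c = Abs_fps (\<lambda>n. \<Sum>i\<in>{0..n}. of_nat (n choose i) * c ^ i / fact i)"

lemma agree_compose_trunc: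
  assumes "fps_nth b 0 = 0"
  shows "agree n (a oo b) (\<Sum>i\<in>{0..n}. fps_const (fps_nth a i) * b ^ i)"
  unfolding agree_def
proof (intro allI impI)
  fix j assume j: "j \<le> n"
  have "fps_nth (\<Sum>i\<in>{0..n}. fps_const (fps_nth a i) * b ^ i) j
      = (\<Sum>i\<in>{0..n}. fps_nth a i * fps_nth (b ^ i) j)"
    by (simp add: fps_sum_nth)
  also have "\<dots> = (\<Sum>i\<in>{0..j}. fps_nth a i * fps_nth (b ^ i) j)"
    using j startsby_zero_power_prefix[OF assms]
    by (intro sum.mono_neutral_right) auto
  finally show "fps_nth (a oo b) j = fps_nth (\<Sum>i\<in>{0..n}. fps_const (fps_nth a i) * b ^ i) j"
    by (simp add: fps_compose_nth)
qed

lemma Q_eq: "Q c = G1 * (fps_exp c oo K1)"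
proof (rule fps_ext)
  fix n
  have "agree n (G1 * (fps_exp c oo K1)) (G1 * (\<Sum>i\<in>{0..n}. fps_const (fps_nth (fps_exp c) i) * K1 ^ i))"
    by (intro agree_mult agree_refl agree_compose_trunc K1_0)
  then have "fps_nth (G1 * (fps_exp c oo K1)) n
     = fps_nth (\<Sum>i\<in>{0..n}. fps_const (fps_nth (fps_exp c) i) * (K1 ^ i * G1)) n"
    by (simp add: agree_def sum_distrib_left algebra_simps)
  also have "\<dots> = (\<Sum>i\<in>{0..n}. c ^ i / fact i * of_nat (n choose i))"
    by (simp add: fps_sum_nth K1_pow_G1_nth)
  finally show "fps_nth (Q c) n = fps_nth (G1 * (fps_exp c oo K1)) n"
    by (simp add: Q_def algebra_simps)
qed

lemma is_exp_Q: "is_exp (Q c) (- L 1 + fps_const c * K1)"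
  unfolding Q_eq by (intro is_exp_mult is_exp_G1 is_exp_exp K1_0)



definition cc :: "complex \<Rightarrow> complex \<Rightarrow> complex \<Rightarrow> complex \<Rightarrow> complex \<Rightarrow> nat \<Rightarrow> complex" where
  "cc \<kappa> q1 q2 t1 t2 k = \<kappa> * (q1 ^ k - q2 ^ k) * (t2 ^ k - t1 ^ k) / of_nat k"

definition MS :: "nat set \<Rightarrow> (nat \<Rightarrow> nat set) \<Rightarrow> nat multiset set" where
  "MS K A = {\<nu>. set_mset \<nu> \<subseteq> K \<and> (\<forall>k\<in>K. count \<nu> k \<in> A k)}"

lemma MS_empty: "MS {} A = {{#}}"
  by (auto simp: MS_def)

lemma MS_insert:
  assumes "k0 \<notin> K"
  shows "MS (insert k0 K) A = (\<lambda>(j,\<nu>). \<nu> + replicate_mset j k0) ` (A k0 \<times> MS K A)"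
proof (intro equalityI subsetI)
  fix \<mu> assume mu: "\<mu> \<in> MS (insert k0 K) A"
  define \<nu> where "\<nu> = \<mu> - replicate_mset (count \<mu> k0) k0"
  have cnu: "count \<nu> k = (if k = k0 then 0 else count \<mu> k)" for k
    by (simp add: \<nu>_def)
  have "\<mu> = \<nu> + replicate_mset (count \<mu> k0) k0"
    by (simp add: multiset_eq_iff cnu)
  moreover have "\<nu> \<in> MS K A"
  proof -
    have "set_mset \<nu> \<subseteq> K"
    proof
      fix x assume "x \<in># \<nu>"
      then have "count \<nu> x > 0" by simp
      then have "x \<noteq> k0" "count \<mu> x > 0" by (auto simp: cnu split: if_splits)
      then show "x \<in> K" using mu by (auto simp: MS_def)
    qed
    moreover have "\<forall>k\<in>K. count \<nu> k \<in> A k" using mu assms by (auto simp: MS_def cnu)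
    ultimately show ?thesis by (simp add: MS_def)
  qed
  moreover have "count \<mu> k0 \<in> A k0" using mu by (simp add: MS_def)
  ultimately show "\<mu> \<in> (\<lambda>(j,\<nu>). \<nu> + replicate_mset j k0) ` (A k0 \<times> MS K A)"
    by force
next
  fix \<mu> assume "\<mu> \<in> (\<lambda>(j,\<nu>). \<nu> + replicate_mset j k0) ` (A k0 \<times> MS K A)"
  then obtain j \<nu> where j: "j \<in> A k0" and nu: "\<nu> \<in> MS K A" and mu: "\<mu> = \<nu> + replicate_mset j k0"
    by auto
  have c0: "count \<nu> k0 = 0" using nu assms by (auto simp: MS_def count_eq_zero_iff)
  show "\<mu> \<in> MS (insert k0 K) A"
    using nu j c0 unfolding mu MS_def by (auto simp: count_replicate_mset)
qed

lemma MS_inj: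
  assumes "k0 \<notin> K"
  shows "inj_on (\<lambda>(j,\<nu>). \<nu> + replicate_mset j k0) (A k0 \<times> MS K A)"
proof (rule inj_onI, clarify)
  fix j \<nu> j' \<nu>'
  assume nu: "\<nu> \<in> MS K A" and nu': "\<nu>' \<in> MS K A"
    and eq: "\<nu> + replicate_mset j k0 = \<nu>' + replicate_mset j' k0"
  have c0: "count \<nu> k0 = 0" "count \<nu>' k0 = 0" using nu nu' assms by (auto simp: MS_def count_eq_zero_iff)
  have "count (\<nu> + replicate_mset j k0) k0 = count (\<nu>' + replicate_mset j' k0) k0" using eq by simp
  then have jj: "j = j'" using c0 by simp
  with eq have "\<nu> = \<nu>'" by simp
  with jj show "j = j' \<and> \<nu> = \<nu>'" by simp
qed

lemma MS_finite_prod: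
  fixes f :: "nat \<Rightarrow> nat \<Rightarrow> 'a::comm_semiring_1"
  assumes "finite K" "\<And>k. k \<in> K \<Longrightarrow> finite (A k)"
  shows "finite (MS K A) \<and> (\<Prod>k\<in>K. \<Sum>j\<in>A k. f k j) = (\<Sum>\<nu>\<in>MS K A. \<Prod>k\<in>K. f k (count \<nu> k))"
  using assms
proof (induction K rule: finite_induct)
  case empty then show ?case by (simp add: MS_empty)
next
  case (insert k0 K)
  have IH: "finite (MS K A)" "(\<Prod>k\<in>K. \<Sum>j\<in>A k. f k j) = (\<Sum>\<nu>\<in>MS K A. \<Prod>k\<in>K. f k (count \<nu> k))"
    using insert by auto
  have fA: "finite (A k0)" using insert by auto
  have fin: "finite (MS (insert k0 K) A)"
    unfolding MS_insert[OF insert(2)] using IH fA by auto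
  have c0: "count \<nu> k0 = 0" if "\<nu> \<in> MS K A" for \<nu>
    using that insert(2) by (auto simp: MS_def count_eq_zero_iff)
  have "(\<Prod>k\<in>insert k0 K. \<Sum>j\<in>A k. f k j) = (\<Sum>j\<in>A k0. f k0 j) * (\<Sum>\<nu>\<in>MS K A. \<Prod>k\<in>K. f k (count \<nu> k))"
    using insert IH by simp
  also have "\<dots> = (\<Sum>(j,\<nu>)\<in>A k0 \<times> MS K A. f k0 j * (\<Prod>k\<in>K. f k (count \<nu> k)))"
    by (simp add: sum_product sum.cartesian_product)
  also have "\<dots> = (\<Sum>(j,\<nu>)\<in>A k0 \<times> MS K A. \<Prod>k\<in>insert k0 K. f k (count (\<nu> + replicate_mset j k0) k))"
  proof (intro sum.cong refl, clarify)
    fix j \<nu> assume "j \<in> A k0" "\<nu> \<in> MS K A"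
    then have "count \<nu> k0 = 0" using c0 by blast
    moreover have "(\<Prod>k\<in>K. f k (count (\<nu> + replicate_mset j k0) k)) = (\<Prod>k\<in>K. f k (count \<nu> k))"
      using insert(2) by (intro prod.cong refl) (auto simp: count_replicate_mset)
    ultimately show "f k0 j * (\<Prod>k\<in>K. f k (count \<nu> k)) =
       (\<Prod>k\<in>insert k0 K. f k (count (\<nu> + replicate_mset j k0) k))"
      using insert by (simp add: count_replicate_mset)
  qed
  also have "\<dots> = (\<Sum>\<nu>\<in>MS (insert k0 K) A. \<Prod>k\<in>insert k0 K. f k (count \<nu> k))"
    unfolding MS_insert[OF insert(2)]
    by (subst sum.reindex[OF MS_inj[OF insert(2)]]) (simp add: case_prod_beta')
  finally show ?case using fin by simp
qed

lemma sum_mset_count: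
  assumes "finite K" "set_mset \<nu> \<subseteq> K"
  shows "sum_mset \<nu> = (\<Sum>k\<in>K. k * count \<nu> k)"
  using assms(2)
proof (induction \<nu>)
  case empty then show ?case by simp
next
  case (add x \<nu>)
  then have x: "x \<in> K" by simp
  have "(\<Sum>k\<in>K. k * count (add_mset x \<nu>) k) = (\<Sum>k\<in>K. k * count \<nu> k + (if k = x then x else 0))"
    by (intro sum.cong refl) auto
  also have "\<dots> = (\<Sum>k\<in>K. k * count \<nu> k) + x"
    using assms(1) x by (simp add: sum.distrib)
  finally show ?case using add by simp
qed



lemma agree_prod:
  assumes "finite I" "\<And>i. i \<in> I \<Longrightarrow> agree n (f i) (g i)"
  shows "agree n (\<Prod>i\<in>I. f i) (\<Prod>i\<in>I. g i)"
  using assms by (induction I rule: finite_induct) (auto intro: agree_mult agree_refl)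

lemma agree_compose_Xpow:
  assumes "0 < k"
  shows "agree d (F oo fps_X ^ k) (\<Sum>j\<in>{0..d}. fps_const (fps_nth F j) * fps_X ^ (k * j))"
  unfolding agree_def
proof (intro allI impI)
  fix n assume n: "n \<le> d"
  have "fps_nth (\<Sum>j\<in>{0..d}. fps_const (fps_nth F j) * fps_X ^ (k * j)) n
      = (\<Sum>j\<in>{0..d}. if j = n div k \<and> k dvd n then fps_nth F j else 0)"
    unfolding fps_sum_nth using assms
    by (intro sum.cong refl) (auto simp: fps_X_power_nth)
  also have "\<dots> = (if k dvd n then fps_nth F (n div k) else 0)"
  proof (cases "k dvd n")
    case True
    have "n div k \<le> d" using n div_le_dividend order_trans by blast
    with True show ?thesis by (simp add: sum.delta')
  qed simp
  finally show "fps_nth (F oo fps_X ^ k) n = fps_nth (\<Sum>j\<in>{0..d}. fps_const (fps_nth F j) * fps_X ^ (k * j)) n"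
    using compose_Xpow_nth[OF assms] by simp
qed

lemma partitions_of_MS:
  "partitions_of d = {\<nu>\<in>MS {1..Suc d} (\<lambda>_. {0..d}). sum_mset \<nu> = d}"
proof (intro equalityI subsetI)
  fix p assume "p \<in> partitions_of d"
  then have p0: "0 \<notin># p" and ps: "sum_mset p = d" by (auto simp: partitions_of_def is_partition_def)
  have le: "x \<le> d" if "x \<in># p" for x
  proof -
    have "sum_mset p = x + sum_mset (p - {#x#})" using that by (simp add: sum_mset.remove)
    then show ?thesis using ps by linarith
  qed
  have sK: "set_mset p \<subseteq> {1..Suc d}"
  proof
    fix x assume "x \<in># p"
    then have "x \<noteq> 0" "x \<le> d" using p0 le by (metis, blast)
    then show "x \<in> {1..Suc d}" by auto
  qed
  have "count p k \<le> d" if "k \<in> {1..Suc d}" for k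
  proof -
    have "k * count p k \<le> (\<Sum>k\<in>{1..Suc d}. k * count p k)"
      using that by (intro member_le_sum) auto
    also have "\<dots> = d" using sum_mset_count[OF _ sK] ps by simp
    finally have kd: "k * count p k \<le> d" .
    have "1 \<le> k" using that by simp
    then have "count p k \<le> k * count p k" by simp
    with kd show ?thesis by linarith
  qed
  then show "p \<in> {\<nu>\<in>MS {1..Suc d} (\<lambda>_. {0..d}). sum_mset \<nu> = d}"
    using sK ps by (auto simp: MS_def)
next
  fix p assume "p \<in> {\<nu>\<in>MS {1..Suc d} (\<lambda>_. {0..d}). sum_mset \<nu> = d}"
  then show "p \<in> partitions_of d"
    by (auto simp: MS_def partitions_of_def is_partition_def)
qed

lemma fps_const_prod': "fps_const (\<Prod>k\<in>K. f k) = (\<Prod>k\<in>K. fps_const (f k) :: complex fps)"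
proof (induction K rule: infinite_finite_induct)
  case (insert x F)
  then show ?case by (metis fps_const_mult prod.insert)
qed auto

lemma trace_coeff:
  fixes F :: "nat \<Rightarrow> complex fps"
  assumes F0: "\<And>k. fps_nth (F k) 0 = 1"
  shows "fps_nth (\<Prod>i\<in>{0..d}. F (Suc i) oo fps_X ^ Suc i) d =
         (\<Sum>p\<in>partitions_of d. \<Prod>k\<in>set_mset p. fps_nth (F k) (count p k))"
proof -
  define K where "K = {1..Suc d}"
  have e1: "(\<Prod>i\<in>{0..d}. F (Suc i) oo fps_X ^ Suc i) = (\<Prod>k\<in>K. F k oo fps_X ^ k)"
    unfolding K_def One_nat_def prod.atLeast_Suc_atMost_Suc_shift by (simp only: comp_def)
  moreover have ag: "agree d (\<Prod>k\<in>K. F k oo fps_X ^ k)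
      (\<Prod>k\<in>K. \<Sum>j\<in>{0..d}. fps_const (fps_nth (F k) j) * fps_X ^ (k * j))"
    unfolding K_def by (intro agree_prod agree_compose_Xpow) auto
  moreover have e2: "(\<Prod>k\<in>K. \<Sum>j\<in>{0..d}. fps_const (fps_nth (F k) j) * fps_X ^ (k * j))
      = (\<Sum>\<nu>\<in>MS K (\<lambda>_. {0..d}). \<Prod>k\<in>K. fps_const (fps_nth (F k) (count \<nu> k)) * fps_X ^ (k * count \<nu> k))"
    using MS_finite_prod[of K "\<lambda>_. {0..d}" "\<lambda>k j. fps_const (fps_nth (F k) j) * fps_X ^ (k * j)"]
    unfolding K_def by simp
  moreover have fin: "finite (MS K (\<lambda>_. {0..d}))"
    using MS_finite_prod[of K "\<lambda>_. {0..d}" "\<lambda>k j. 0::nat"] unfolding K_def by simp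
  moreover have e3: "fps_nth (\<Sum>\<nu>\<in>MS K (\<lambda>_. {0..d}). \<Prod>k\<in>K. fps_const (fps_nth (F k) (count \<nu> k)) * fps_X ^ (k * count \<nu> k)) d
      = (\<Sum>\<nu>\<in>MS K (\<lambda>_. {0..d}). if sum_mset \<nu> = d then \<Prod>k\<in>K. fps_nth (F k) (count \<nu> k) else 0)"
  proof -
    have *: "(\<Prod>k\<in>K. fps_const (fps_nth (F k) (count \<nu> k)) * fps_X ^ (k * count \<nu> k))
        = fps_const (\<Prod>k\<in>K. fps_nth (F k) (count \<nu> k)) * fps_X ^ (sum_mset \<nu>)"
      if "\<nu> \<in> MS K (\<lambda>_. {0..d})" for \<nu>
    proof -
      have "sum_mset \<nu> = (\<Sum>k\<in>K. k * count \<nu> k)"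
        using that unfolding K_def MS_def by (intro sum_mset_count) auto
      then have "fps_X ^ (sum_mset \<nu>) = (\<Prod>k\<in>K. fps_X ^ (k * count \<nu> k) :: complex fps)"
        by (simp only: power_sum)
      then show ?thesis
        by (simp only: prod.distrib fps_const_prod')
    qed
    show ?thesis
      unfolding fps_sum_nth
    proof (intro sum.cong refl)
      fix \<nu> assume "\<nu> \<in> MS K (\<lambda>_. {0..d})"
      then show "fps_nth (\<Prod>k\<in>K. fps_const (fps_nth (F k) (count \<nu> k)) * fps_X ^ (k * count \<nu> k)) d
         = (if sum_mset \<nu> = d then \<Prod>k\<in>K. fps_nth (F k) (count \<nu> k) else 0)"
        by (simp only: *) (simp add: fps_X_power_nth)
    qed
  qed
  ultimately have "fps_nth (\<Prod>i\<in>{0..d}. F (Suc i) oo fps_X ^ Suc i) d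
      = (\<Sum>\<nu>\<in>MS K (\<lambda>_. {0..d}). if sum_mset \<nu> = d then \<Prod>k\<in>K. fps_nth (F k) (count \<nu> k) else 0)"
  proof -
    have "fps_nth (\<Prod>k\<in>K. F k oo fps_X ^ k) d = fps_nth (\<Prod>k\<in>K. \<Sum>j\<in>{0..d}. fps_const (fps_nth (F k) j) * fps_X ^ (k * j)) d"
      using ag unfolding agree_def by blast
    then show ?thesis by (simp only: e1 e2 e3)
  qed
  also have "\<dots> = (\<Sum>\<nu>\<in>{\<nu>\<in>MS K (\<lambda>_. {0..d}). sum_mset \<nu> = d}. \<Prod>k\<in>K. fps_nth (F k) (count \<nu> k))"
    using fin by (simp add: sum.inter_filter)
  also have "\<dots> = (\<Sum>p\<in>partitions_of d. \<Prod>k\<in>set_mset p. fps_nth (F k) (count p k))"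
    unfolding partitions_of_MS K_def[symmetric]
  proof (intro sum.cong refl)
    fix p assume "p \<in> {\<nu>\<in>MS K (\<lambda>_. {0..d}). sum_mset \<nu> = d}"
    then have "set_mset p \<subseteq> K" by (simp add: MS_def)
    then show "(\<Prod>k\<in>K. fps_nth (F k) (count p k)) = (\<Prod>k\<in>set_mset p. fps_nth (F k) (count p k))"
      using F0 by (intro prod.mono_neutral_right) (auto simp: K_def not_in_iff)
  qed
  finally show ?thesis .
qed



lemma prod_ops_Nil[simp]: "prod_ops X [] = id"
  by (simp add: prod_ops_def)

lemma prod_ops_Cons[simp]: "prod_ops X (k # ks) = X k \<circ> prod_ops X ks"
  by (simp add: prod_ops_def)

lemma PX:
  "prod_ops (\<lambda>k. scale_op (a k) (a_minus k)) ks f \<mu> =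
     prod_list (map a ks) * (if mset ks \<subseteq># \<mu> then f (\<mu> - mset ks) else 0)"
proof (induction ks arbitrary: \<mu>)
  case Nil then show ?case by simp
next
  case (Cons k ks)
  have "prod_ops (\<lambda>k. scale_op (a k) (a_minus k)) (k # ks) f \<mu>
     = a k * (if k \<in># \<mu> then prod_ops (\<lambda>k. scale_op (a k) (a_minus k)) ks f (\<mu> - {#k#}) else 0)"
    by (simp add: scale_op_def a_minus_def)
  also have "\<dots> = a k * (if k \<in># \<mu> then prod_list (map a ks) *
       (if mset ks \<subseteq># \<mu> - {#k#} then f (\<mu> - {#k#} - mset ks) else 0) else 0)"
    by (simp add: Cons.IH)
  also have "\<dots> = prod_list (map a (k # ks)) * (if mset (k # ks) \<subseteq># \<mu> then f (\<mu> - mset (k # ks)) else 0)"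
    by (auto simp: insert_subset_eq_iff)
  finally show ?case .
qed

definition Wk :: "nat set \<Rightarrow> nat multiset \<Rightarrow> nat multiset \<Rightarrow> complex" where
  "Wk K \<mu> \<nu> = (\<Prod>k\<in>K. pochhammer (of_nat (count \<mu> k) + 1) (count \<nu> k))"

lemma Wk_step:
  assumes "finite K" "k \<in> K"
  shows "(of_nat (count \<mu> k) + 1) * Wk K (\<mu> + {#k#}) \<nu> = Wk K \<mu> (add_mset k \<nu>)"
proof -
  have "Wk K (\<mu> + {#k#}) \<nu> = pochhammer (of_nat (count \<mu> k) + 2) (count \<nu> k) *
       (\<Prod>j\<in>K - {k}. pochhammer (of_nat (count \<mu> j) + 1) (count \<nu> j))"
    unfolding Wk_def using assms
    by (subst prod.remove[of _ k]) (auto intro!: prod.cong simp: add_ac)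
  moreover have "Wk K \<mu> (add_mset k \<nu>) = pochhammer (of_nat (count \<mu> k) + 1) (Suc (count \<nu> k)) *
       (\<Prod>j\<in>K - {k}. pochhammer (of_nat (count \<mu> j) + 1) (count \<nu> j))"
    unfolding Wk_def using assms
    by (subst prod.remove[of _ k]) (auto intro!: prod.cong)
  ultimately show ?thesis
    by (simp add: pochhammer_rec add_ac)
qed

lemma Wk_set:
  assumes "finite K" "set_mset \<nu> \<subseteq> K"
  shows "Wk K \<mu> \<nu> = Wk (set_mset \<nu>) \<mu> \<nu>"
  unfolding Wk_def using assms
  by (intro prod.mono_neutral_right) (auto simp: not_in_iff)

lemma PY:
  assumes "finite K" "set ks \<subseteq> K"
  shows "prod_ops (\<lambda>k. scale_op (b k) (a_plus \<kappa> k)) ks f \<mu> =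
     prod_list (map (\<lambda>k. b k * (\<kappa> * of_nat k)) ks) * Wk K \<mu> (mset ks) * f (\<mu> + mset ks)"
  using assms(2)
proof (induction ks arbitrary: \<mu>)
  case Nil then show ?case by (simp add: Wk_def)
next
  case (Cons k ks)
  then have kK: "k \<in> K" and sK: "set ks \<subseteq> K" by auto
  have "prod_ops (\<lambda>k. scale_op (b k) (a_plus \<kappa> k)) (k # ks) f \<mu>
     = b k * (\<kappa> * of_nat k * of_nat (count \<mu> k + 1) *
        prod_ops (\<lambda>k. scale_op (b k) (a_plus \<kappa> k)) ks f (\<mu> + {#k#}))"
    by (simp add: scale_op_def a_plus_def)
  also have "\<dots> = b k * (\<kappa> * of_nat k) * prod_list (map (\<lambda>k. b k * (\<kappa> * of_nat k)) ks) *
        ((of_nat (count \<mu> k) + 1) * Wk K (\<mu> + {#k#}) (mset ks)) * f (\<mu> + {#k#} + mset ks)"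
    using Cons.IH[OF sK] by (simp add: algebra_simps)
  also have "\<dots> = prod_list (map (\<lambda>k. b k * (\<kappa> * of_nat k)) (k # ks)) * Wk K \<mu> (mset (k # ks))
        * f (\<mu> + mset (k # ks))"
    unfolding Wk_step[OF assms(1) kK] by (simp add: add_ac mult_ac)
  finally show ?case .
qed

definition CL :: "nat \<Rightarrow> nat list set" where
  "CL n = {ks. (\<forall>k\<in>set ks. 1 \<le> k) \<and> sum_list ks = n}"

lemma length_le_sum_list: "\<forall>k\<in>set ks. 1 \<le> k \<Longrightarrow> length ks \<le> sum_list (ks::nat list)"
  by (induction ks) auto

lemma finite_compositions: "finite (compositions n m)"
proof -
  have "compositions n m \<subseteq> {ks. set ks \<subseteq> {0..n} \<and> length ks = m}"
    by (auto simp: compositions_def member_le_sum_list)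
  moreover have "finite {ks. set ks \<subseteq> {0..n} \<and> length ks = m}"
    by (rule finite_lists_length_eq) simp
  ultimately show ?thesis by (rule finite_subset)
qed

lemma CL_Union: "CL n = (\<Union>m\<in>{0..n}. compositions n m)"
  by (auto simp: CL_def compositions_def length_le_sum_list)

lemma finite_CL: "finite (CL n)"
  unfolding CL_Union by (auto intro: finite_compositions)

lemma exp_coeff_CL:
  "exp_coeff X n f \<mu> = (\<Sum>ks\<in>CL n. 1 / fact (length ks) * prod_ops X ks f \<mu>)"
proof -
  have "exp_coeff X n f \<mu> = (\<Sum>m\<in>{0..n}. \<Sum>ks\<in>compositions n m. 1 / fact (length ks) * prod_ops X ks f \<mu>)"
    unfolding exp_coeff_def sum_op_def scale_op_def
    by (auto simp: sum_distrib_left compositions_def intro!: sum.cong)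
  also have "\<dots> = (\<Sum>ks\<in>CL n. 1 / fact (length ks) * prod_ops X ks f \<mu>)"
    unfolding CL_Union
    apply (rule sum.UNION_disjoint[symmetric])
      apply simp
     apply (simp add: finite_compositions)
    apply (auto simp: compositions_def)
    done
  finally show ?thesis .
qed



lemma prod_mset_image_count:
  assumes "finite K" "set_mset \<nu> \<subseteq> K"
  shows "prod_mset (image_mset f \<nu>) = (\<Prod>k\<in>K. (f k :: complex) ^ count \<nu> k)"
  using assms(2)
proof (induction \<nu>)
  case empty then show ?case by simp
next
  case (add x \<nu>)
  then have x: "x \<in> K" by simp
  have "(\<Prod>k\<in>K. f k ^ count (add_mset x \<nu>) k) = (\<Prod>k\<in>K. f k ^ count \<nu> k * (if k = x then f x else 1))"
    by (intro prod.cong refl) auto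
  also have "\<dots> = (\<Prod>k\<in>K. f k ^ count \<nu> k) * f x"
    using assms(1) x by (simp add: prod.distrib prod.delta)
  finally show ?case using add by (simp add: mult.commute)
qed

lemma sub_MS: "{\<nu>. \<nu> \<subseteq># (p::nat multiset)} = MS (set_mset p) (\<lambda>k. {0..count p k})"
proof (intro equalityI subsetI)
  fix \<nu> assume "\<nu> \<in> {\<nu>. \<nu> \<subseteq># p}"
  then have "\<nu> \<subseteq># p" by simp
  then show "\<nu> \<in> MS (set_mset p) (\<lambda>k. {0..count p k})"
    by (auto simp: MS_def mset_subset_eq_count dest: set_mset_mono)
next
  fix \<nu> assume "\<nu> \<in> MS (set_mset p) (\<lambda>k. {0..count p k})"
  then have a: "set_mset \<nu> \<subseteq> set_mset p" and b: "\<forall>k\<in>set_mset p. count \<nu> k \<le> count p k"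
    by (auto simp: MS_def)
  have "count \<nu> k \<le> count p k" for k
  proof (cases "k \<in># p")
    case False
    then have "k \<notin># \<nu>" using a by auto
    then show ?thesis by (simp add: not_in_iff)
  qed (use b in auto)
  then show "\<nu> \<in> {\<nu>. \<nu> \<subseteq># p}" by (simp add: subseteq_mset_def)
qed

lemma finite_sub: "finite {\<nu>. \<nu> \<subseteq># (p::nat multiset)}"
  unfolding sub_MS using MS_finite_prod[of "set_mset p" "\<lambda>k. {0..count p k}" "\<lambda>k j. 0::nat"] by simp

lemma poch_binom:
  assumes "j \<le> P"
  shows "pochhammer (of_nat (P - j) + 1) j = fact j * (of_nat (P choose j) :: complex)"
proof -
  have "(of_nat (P choose j) :: complex) = pochhammer (of_nat P - of_nat j + 1) j / fact j"
    by (simp add: binomial_gbinomial gbinomial_pochhammer')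
  moreover have "(of_nat P - of_nat j :: complex) = of_nat (P - j)" using assms by (simp add: of_nat_diff)
  ultimately show ?thesis by simp
qed



lemma diff_add_eq_iff:
  assumes "\<nu> \<subseteq># (p::nat multiset)"
  shows "p - \<nu> + X = p \<longleftrightarrow> X = \<nu>"
proof -
  have "p = (p - \<nu>) + \<nu>" using assms by simp
  then show ?thesis by (metis add_left_cancel)
qed

lemma diag:
  fixes \<kappa> q1 q2 t1 t2 :: complex
  assumes pp: "is_partition p"
  shows "V0 \<kappa> q1 q2 t1 t2 (basis_vec p) p =
         (\<Prod>k\<in>set_mset p. fps_nth (Q (cc \<kappa> q1 q2 t1 t2 k)) (count p k))"
proof -
  define al :: "nat \<Rightarrow> complex" where "al k = (q1 ^ k - q2 ^ k) / of_nat k" for k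
  define bw :: "nat \<Rightarrow> complex" where "bw k = (t2 ^ k - t1 ^ k) / of_nat k * (\<kappa> * of_nat k)" for k
  define N where "N = sum_mset p"
  define A where "A \<nu> = prod_mset (image_mset al \<nu>)" for \<nu>
  define B where "B \<nu> = prod_mset (image_mset bw \<nu>)" for \<nu>
  define W where "W \<nu> = Wk (set_mset \<nu>) (p - \<nu>) \<nu>" for \<nu>
  define R where "R \<nu> = of_nat (card (permutations_of_multiset \<nu>)) / (fact (size \<nu>))\<^sup>2 * A \<nu> * B \<nu> * W \<nu>" for \<nu>
  have plist: "prod_list (map f ks) = prod_mset (image_mset f (mset ks))" for f :: "nat \<Rightarrow> complex" and ks
    by (simp flip: prod_mset_prod_list)
  have Ep: "E_plus_coeff \<kappa> t1 t2 n (basis_vec p) \<rho> =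
      (\<Sum>js\<in>CL n. 1 / fact (length js) * (prod_list (map bw js) * Wk {1..n} \<rho> (mset js) * basis_vec p (\<rho> + mset js)))"
    for n \<rho>
    unfolding E_plus_coeff_def exp_coeff_CL
  proof (intro sum.cong refl)
    fix js assume "js \<in> CL n"
    then have "set js \<subseteq> {1..n}" by (auto simp: CL_def member_le_sum_list)
    then show "1 / fact (length js) * prod_ops (\<lambda>k. scale_op ((t2 ^ k - t1 ^ k) / of_nat k) (a_plus \<kappa> k)) js (basis_vec p) \<rho> =
       1 / fact (length js) * (prod_list (map bw js) * Wk {1..n} \<rho> (mset js) * basis_vec p (\<rho> + mset js))"
      by (subst PY[where K="{1..n}"]) (auto simp: bw_def[abs_def])
  qed
  have Em: "E_minus_coeff q1 q2 n g p =
      (\<Sum>ks\<in>CL n. 1 / fact (length ks) * (prod_list (map al ks) * (if mset ks \<subseteq># p then g (p - mset ks) else 0)))"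
    for n g
    unfolding E_minus_coeff_def exp_coeff_CL al_def
    using PX[of "\<lambda>k. (q1 ^ k - q2 ^ k) / of_nat k"] by simp
  have inner: "E_plus_coeff \<kappa> t1 t2 n (basis_vec p) (p - mset ks) =
      of_nat (card (permutations_of_multiset (mset ks))) / fact (length ks) * B (mset ks) * W (mset ks)"
    if ks: "ks \<in> CL n" "mset ks \<subseteq># p" for n ks
  proof -
    define \<nu> where "\<nu> = mset ks"
    have sub: "\<nu> \<subseteq># p" using ks by (simp add: \<nu>_def)
    have sn: "set_mset \<nu> \<subseteq> {1..n}" using ks by (auto simp: \<nu>_def CL_def member_le_sum_list)
    have eqset: "{js\<in>CL n. mset js = \<nu>} = permutations_of_multiset \<nu>"
    proof (intro equalityI subsetI)
      fix js assume "js \<in> permutations_of_multiset \<nu>"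
      then have m: "mset js = mset ks" by (simp add: permutations_of_multiset_def \<nu>_def)
      then have "set js = set ks" by (metis set_mset_mset)
      moreover have "sum_list js = sum_list ks" using m by (metis sum_mset_sum_list)
      ultimately show "js \<in> {js\<in>CL n. mset js = \<nu>}" using ks m by (auto simp: CL_def \<nu>_def)
    qed (auto simp: permutations_of_multiset_def)
    have "E_plus_coeff \<kappa> t1 t2 n (basis_vec p) (p - mset ks) =
        (\<Sum>js\<in>CL n. if mset js = \<nu> then 1 / fact (size \<nu>) * (B \<nu> * W \<nu>) else 0)"
      unfolding Ep \<nu>_def[symmetric]
    proof (intro sum.cong refl)
      fix js assume js: "js \<in> CL n"
      show "1 / fact (length js) * (prod_list (map bw js) * Wk {1..n} (p - \<nu>) (mset js) * basis_vec p (p - \<nu> + mset js)) =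
         (if mset js = \<nu> then 1 / fact (size \<nu>) * (B \<nu> * W \<nu>) else 0)"
      proof (cases "mset js = \<nu>")
        case True
        then have "length js = size \<nu>" by (metis size_mset)
        moreover have "Wk {1..n} (p - \<nu>) (mset js) = W \<nu>"
          unfolding W_def True using sn by (intro Wk_set) auto
        ultimately show ?thesis using True sub by (simp add: basis_vec_def plist B_def)
      next
        case False
        then show ?thesis using diff_add_eq_iff[OF sub] by (simp add: basis_vec_def)
      qed
    qed
    also have "\<dots> = (\<Sum>js\<in>{js\<in>CL n. mset js = \<nu>}. 1 / fact (size \<nu>) * (B \<nu> * W \<nu>))"
      by (rule sum.inter_filter[symmetric]) (simp add: finite_CL)
    also have "\<dots> = of_nat (card (permutations_of_multiset \<nu>)) * (1 / fact (size \<nu>) * (B \<nu> * W \<nu>))"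
      unfolding eqset by simp
    finally show ?thesis by (simp add: \<nu>_def)
  qed
  define LS where "LS = {ks. mset ks \<subseteq># p}"
  have finLS: "finite LS"
  proof -
    have "LS \<subseteq> {ks. set ks \<subseteq> set_mset p \<and> length ks \<le> size p}"
      unfolding LS_def by (auto dest: mset_subset_eqD size_mset_mono)
    moreover have "finite {ks. set ks \<subseteq> set_mset p \<and> length ks \<le> size p}"
      by (rule finite_lists_length_le) simp
    ultimately show ?thesis by (rule finite_subset)
  qed
  have step1: "V0 \<kappa> q1 q2 t1 t2 (basis_vec p) p =
      (\<Sum>n\<in>{0..N}. \<Sum>ks\<in>CL n. if mset ks \<subseteq># p then R (mset ks) else 0)"
    unfolding V0_def N_def Em
  proof (intro sum.cong refl)
    fix n ks assume ks: "ks \<in> CL n"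
    show "1 / fact (length ks) * (prod_list (map al ks) *
           (if mset ks \<subseteq># p then E_plus_coeff \<kappa> t1 t2 n (basis_vec p) (p - mset ks) else 0)) =
          (if mset ks \<subseteq># p then R (mset ks) else 0)"
      using inner[OF ks] by (simp add: R_def plist A_def power2_eq_square)
  qed
  also have "\<dots> = (\<Sum>n\<in>{0..N}. \<Sum>ks\<in>{ks\<in>CL n. mset ks \<subseteq># p}. R (mset ks))"
    by (intro sum.cong refl sum.inter_filter[symmetric]) (simp add: finite_CL)
  also have "\<dots> = (\<Sum>ks\<in>(\<Union>n\<in>{0..N}. {ks\<in>CL n. mset ks \<subseteq># p}). R (mset ks))"
    apply (rule sum.UNION_disjoint[symmetric])
      apply simp
     apply (simp add: finite_CL)
    apply (auto simp: CL_def)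
    done
  also have "(\<Union>n\<in>{0..N}. {ks\<in>CL n. mset ks \<subseteq># p}) = LS"
  proof (intro equalityI subsetI)
    fix ks assume "ks \<in> LS"
    then have sub: "mset ks \<subseteq># p" by (simp add: LS_def)
    have "\<forall>k\<in>set ks. 1 \<le> k"
      using pp set_mset_mono[OF sub] by (auto simp: is_partition_def Suc_le_eq intro!: gr0I)
    moreover have "sum_list ks \<le> N"
    proof -
      have "p = mset ks + (p - mset ks)" using sub by simp
      then have "sum_mset p = sum_mset (mset ks) + sum_mset (p - mset ks)" by (metis sum_mset.union)
      then show ?thesis by (simp add: N_def sum_mset_sum_list)
    qed
    ultimately show "ks \<in> (\<Union>n\<in>{0..N}. {ks\<in>CL n. mset ks \<subseteq># p})" using sub by (auto simp: CL_def)
  qed (auto simp: LS_def)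
  also have "(\<Sum>ks\<in>LS. R (mset ks)) =
      (\<Sum>\<nu>\<in>{\<nu>. \<nu> \<subseteq># p}. \<Sum>ks\<in>{ks. ks \<in> LS \<and> mset ks = \<nu>}. R (mset ks))"
    by (rule sum.group[symmetric]) (use finLS finite_sub in \<open>auto simp: LS_def\<close>)
  also have "\<dots> = (\<Sum>\<nu>\<in>{\<nu>. \<nu> \<subseteq># p}. of_nat (card (permutations_of_multiset \<nu>)) * R \<nu>)"
  proof (intro sum.cong refl)
    fix \<nu> assume "\<nu> \<in> {\<nu>. \<nu> \<subseteq># p}"
    then have "{ks. ks \<in> LS \<and> mset ks = \<nu>} = permutations_of_multiset \<nu>"
      by (auto simp: LS_def permutations_of_multiset_def)
    then show "(\<Sum>ks\<in>{ks. ks \<in> LS \<and> mset ks = \<nu>}. R (mset ks)) = of_nat (card (permutations_of_multiset \<nu>)) * R \<nu>"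
      by (simp add: permutations_of_multiset_def)
  qed
  finally have S1: "V0 \<kappa> q1 q2 t1 t2 (basis_vec p) p =
      (\<Sum>\<nu>\<in>{\<nu>. \<nu> \<subseteq># p}. of_nat (card (permutations_of_multiset \<nu>)) * R \<nu>)" .
  define K where "K = set_mset p"
  define c where "c = cc \<kappa> q1 q2 t1 t2"
  define g where "g k j = of_nat (count p k choose j) * c k ^ j / fact j" for k j
  have finK: "finite K" by (simp add: K_def)
  have K1: "k \<noteq> 0" if "k \<in> K" for k using pp that unfolding K_def is_partition_def by metis
  have abc: "al k * bw k = c k" if "k \<in> K" for k
    using K1[OF that] by (simp add: al_def bw_def c_def cc_def field_simps)
  have per: "of_nat (card (permutations_of_multiset \<nu>)) * R \<nu> = (\<Prod>k\<in>K. g k (count \<nu> k))"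
    if sub: "\<nu> \<subseteq># p" for \<nu>
  proof -
    have sK: "set_mset \<nu> \<subseteq> K" using sub by (auto simp: K_def dest: mset_subset_eqD)
    define F :: complex where "F = (\<Prod>k\<in>K. fact (count \<nu> k))"
    have F0: "F \<noteq> 0" unfolding F_def using finK by (simp add: prod_zero_iff)
    have "(of_nat (card (permutations_of_multiset \<nu>) * (\<Prod>x\<in>set_mset \<nu>. fact (count \<nu> x))) :: complex)
        = of_nat (fact (size \<nu>))"
      by (simp only: card_permutations_of_multiset_aux)
    moreover have "(\<Prod>x\<in>set_mset \<nu>. fact (count \<nu> x) :: complex) = F"
      unfolding F_def using sK finK by (intro prod.mono_neutral_left) (auto simp: not_in_iff)
    ultimately have cardeq: "of_nat (card (permutations_of_multiset \<nu>)) * F = fact (size \<nu>)"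
      by (simp add: of_nat_prod)
    have cF: "of_nat (card (permutations_of_multiset \<nu>)) = fact (size \<nu>) / F"
      using cardeq F0 by (simp add: field_simps)
    have WW: "W \<nu> = (\<Prod>k\<in>K. pochhammer (of_nat (count p k - count \<nu> k) + 1) (count \<nu> k))"
      unfolding W_def by (simp only: Wk_set[OF finK sK, symmetric]) (simp add: Wk_def)
    have "of_nat (card (permutations_of_multiset \<nu>)) * R \<nu> =
        (\<Prod>k\<in>K. al k ^ count \<nu> k) * (\<Prod>k\<in>K. bw k ^ count \<nu> k) * W \<nu> / F\<^sup>2"
      unfolding R_def cF A_def B_def prod_mset_image_count[OF finK sK]
      by (simp add: field_simps power2_eq_square)
    also have "\<dots> = (\<Prod>k\<in>K. al k ^ count \<nu> k * bw k ^ count \<nu> k *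
          pochhammer (of_nat (count p k - count \<nu> k) + 1) (count \<nu> k) / (fact (count \<nu> k))\<^sup>2)"
      unfolding WW F_def by (simp add: prod.distrib prod_dividef prod_power_distrib)
    also have "\<dots> = (\<Prod>k\<in>K. g k (count \<nu> k))"
    proof (intro prod.cong refl)
      fix k assume k: "k \<in> K"
      have le: "count \<nu> k \<le> count p k" using sub by (simp add: mset_subset_eq_count)
      have "al k ^ count \<nu> k * bw k ^ count \<nu> k = c k ^ count \<nu> k"
        using abc[OF k] by (simp flip: power_mult_distrib)
      then show "al k ^ count \<nu> k * bw k ^ count \<nu> k *
          pochhammer (of_nat (count p k - count \<nu> k) + 1) (count \<nu> k) / (fact (count \<nu> k))\<^sup>2 =
          g k (count \<nu> k)"
        unfolding poch_binom[OF le] g_def by (simp add: power2_eq_square field_simps)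
    qed
    finally show ?thesis .
  qed
  have "V0 \<kappa> q1 q2 t1 t2 (basis_vec p) p = (\<Sum>\<nu>\<in>MS K (\<lambda>k. {0..count p k}). \<Prod>k\<in>K. g k (count \<nu> k))"
    unfolding S1 K_def sub_MS[symmetric] using per by (intro sum.cong refl) (auto simp: K_def)
  also have "\<dots> = (\<Prod>k\<in>K. \<Sum>j\<in>{0..count p k}. g k j)"
    using MS_finite_prod[of K "\<lambda>k. {0..count p k}" g] finK by simp
  also have "\<dots> = (\<Prod>k\<in>set_mset p. fps_nth (Q (cc \<kappa> q1 q2 t1 t2 k)) (count p k))"
    unfolding K_def by (intro prod.cong refl) (simp add: Q_def g_def c_def)
  finally show ?thesis .
qed


lemma core:
  "graded_trace (V0 \<kappa> q1 q2 t1 t2) = Pinf (\<lambda>i. Q (cc \<kappa> q1 q2 t1 t2 (Suc i)) oo fps_X ^ Suc i)"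
proof (rule fps_ext)
  fix d
  have Q0: "fps_nth (Q c) 0 = 1" for c by (simp add: Q_def)
  have "fps_nth (graded_trace (V0 \<kappa> q1 q2 t1 t2)) d =
      (\<Sum>p\<in>partitions_of d. \<Prod>k\<in>set_mset p. fps_nth (Q (cc \<kappa> q1 q2 t1 t2 k)) (count p k))"
    unfolding graded_trace_def fps_nth_Abs_fps
    by (intro sum.cong refl diag) (simp add: partitions_of_def)
  also have "\<dots> = fps_nth (\<Prod>i\<in>{0..d}. Q (cc \<kappa> q1 q2 t1 t2 (Suc i)) oo fps_X ^ Suc i) d"
    by (rule trace_coeff[symmetric]) (rule Q0)
  finally show "fps_nth (graded_trace (V0 \<kappa> q1 q2 t1 t2)) d =
      fps_nth (Pinf (\<lambda>i. Q (cc \<kappa> q1 q2 t1 t2 (Suc i)) oo fps_X ^ Suc i)) d"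
    by (simp add: Pinf_def)
qed

lemma is_exp_Pinf_compose:
  assumes "\<And>i. is_exp (g i) (h i)"
  shows "is_exp (Pinf (\<lambda>i. g i oo fps_X ^ Suc i)) (Sinf (\<lambda>i. h i oo fps_X ^ Suc i))"
proof (rule is_exp_Pinf)
  show "is_exp (g i oo fps_X ^ Suc i) (h i oo fps_X ^ Suc i)" for i
    using assms by (intro is_exp_compose) auto
  show "fps_nth (g i oo fps_X ^ Suc i) j = 0" if "0 < j" "j \<le> i" for i j
    using that by (subst compose_Xpow_nth) (auto dest: dvd_imp_le)
  show "fps_nth (h i oo fps_X ^ Suc i) j = 0" if "j \<le> i" for i j
    using that assms[of i] by (subst compose_Xpow_nth) (auto dest: dvd_imp_le simp: is_exp_def)
qed

definition ell :: "complex \<Rightarrow> complex fps" where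
  "ell a = Sinf (\<lambda>i. L a oo fps_X ^ Suc i)"

lemma qpoch_Pinf: "qpoch_inf a = Pinf (\<lambda>i. (1 - fps_const a * fps_X) oo fps_X ^ Suc i)"
proof -
  have "(1 - fps_const a * fps_X) oo fps_X ^ Suc i = 1 - fps_const a * fps_X ^ (i + 1)" for i
    by (simp add: fps_compose_sub_distrib fps_const_mult_apply_left[symmetric])
  then show ?thesis by (simp add: qpoch_inf_def Pinf_def)
qed

lemma is_exp_qpoch: "is_exp (qpoch_inf a) (ell a)"
  unfolding qpoch_Pinf ell_def by (intro is_exp_Pinf_compose is_exp_L)

lemma qpoch_0: "fps_nth (qpoch_inf a) 0 = 1"
  using is_exp_qpoch[of a] by (simp add: is_exp_def)

lemma Sinf_add: "Sinf h1 + Sinf h2 = Sinf (\<lambda>i. h1 i + h2 i)"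
  by (simp add: fps_eq_iff Sinf_def sum.distrib)

lemma Sinf_Xpow_nth:
  "fps_nth (Sinf (\<lambda>i. H i oo fps_X ^ Suc i)) n =
     (\<Sum>i\<in>{0..n}. if Suc i dvd n then fps_nth (H i) (n div Suc i) else 0)"
  unfolding Sinf_def fps_nth_Abs_fps fps_sum_nth
  by (intro sum.cong refl compose_Xpow_nth) simp

lemma K1_nth: "fps_nth K1 m = (if m = 0 then 0 else 1)"
  by (simp add: K1_def G1_def)

lemma divisor_reindex:
  assumes "0 < n"
  shows "(\<Sum>i\<in>{0..n}. if Suc i dvd n then f (n div Suc i) else 0) =
         (\<Sum>i\<in>{0..n}. if Suc i dvd n then f (Suc i) else (0::complex))"
proof -
  have "(\<Sum>i\<in>{0..n}. if Suc i dvd n then f (n div Suc i) else 0) =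
        (\<Sum>i\<in>{i\<in>{0..n}. Suc i dvd n}. f (n div Suc i))"
    by (rule sum.inter_filter[symmetric]) simp
  also have "\<dots> = (\<Sum>i\<in>{i\<in>{0..n}. Suc i dvd n}. f (Suc i))"
  proof -
    have *: "n div Suc (n div Suc i - 1) - 1 = i \<and> n div Suc i - 1 \<in> {i\<in>{0..n}. Suc i dvd n}
          \<and> f (Suc (n div Suc i - 1)) = f (n div Suc i)"
      if i: "i \<in> {i\<in>{0..n}. Suc i dvd n}" for i
    proof -
    from i obtain d where d: "n = Suc i * d" by auto
    with assms have d0: "d > 0" by (cases d) auto
    have nd: "n div Suc i = d" using d by (metis nonzero_mult_div_cancel_left nat.distinct(1))
    have nd2: "n div d = Suc i" using d d0 by simp
    have "n div Suc (n div Suc i - 1) - 1 = i" using nd nd2 d0 by simp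
    moreover have "n div Suc i - 1 \<in> {i\<in>{0..n}. Suc i dvd n}"
      using nd d d0 by (auto simp: Suc_pred dest: dvd_imp_le[OF _ assms])
    moreover have "f (Suc (n div Suc i - 1)) = f (n div Suc i)" using nd d0 by simp
    ultimately show ?thesis by blast
  qed
    show ?thesis
      by (rule sum.reindex_bij_witness[where i="\<lambda>i. n div Suc i - 1" and j="\<lambda>i. n div Suc i - 1"])
         (use * in auto)
  qed
  also have "\<dots> = (\<Sum>i\<in>{0..n}. if Suc i dvd n then f (Suc i) else 0)"
    by (rule sum.inter_filter) simp
  finally show ?thesis .
qed

theorem theorem4p2:
  fixes \<kappa> q1 q2 t1 t2 :: complex
  shows "fock_expect (V0 \<kappa> q1 q2 t1 t2) =
    fps_pow_gen (qpoch_inf (q1 * t1) * qpoch_inf (q2 * t2) /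
                 (qpoch_inf (q1 * t2) * qpoch_inf (q2 * t1))) \<kappa>"
proof -
  define c where "c = cc \<kappa> q1 q2 t1 t2"
  define A where "A = qpoch_inf (q1 * t1) * qpoch_inf (q2 * t2)"
  define B where "B = qpoch_inf (q1 * t2) * qpoch_inf (q2 * t1)"
  define E where "E = ell (q1 * t1) + ell (q2 * t2) + - (ell (q1 * t2) + ell (q2 * t1))"
  have eA: "is_exp A (ell (q1 * t1) + ell (q2 * t2))"
    unfolding A_def by (intro is_exp_mult is_exp_qpoch)
  have eB: "is_exp B (ell (q1 * t2) + ell (q2 * t1))"
    unfolding B_def by (intro is_exp_mult is_exp_qpoch)
  have B0: "fps_nth B 0 \<noteq> 0" using eB by (simp add: is_exp_def)
  have eF: "is_exp (A / B) E"
    unfolding fps_divide_unit[OF B0] E_def by (intro is_exp_mult eA is_exp_inverse eB)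
  have F0: "fps_nth (A / B) 0 = 1" using eF by (simp add: is_exp_def)
  have "fps_ln 1 oo (A / B - 1) = E"
    using is_exp_uniq_H[OF is_exp_ln[OF F0] eF] .
  then have eR: "is_exp (fps_pow_gen (A / B) \<kappa>) (fps_const \<kappa> * E)"
    unfolding fps_pow_gen_def using eF by (metis is_exp_exp is_exp_def)
  have eT: "is_exp (graded_trace (V0 \<kappa> q1 q2 t1 t2))
            (Sinf (\<lambda>i. (- L 1 + fps_const (c (Suc i)) * K1) oo fps_X ^ Suc i))"
    unfolding core c_def by (intro is_exp_Pinf_compose is_exp_Q)
  have eL: "is_exp (fock_expect (V0 \<kappa> q1 q2 t1 t2))
     (ell 1 + Sinf (\<lambda>i. (- L 1 + fps_const (c (Suc i)) * K1) oo fps_X ^ Suc i))"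
    unfolding fock_expect_def by (intro is_exp_mult eT is_exp_qpoch)
  have EE: "ell 1 + Sinf (\<lambda>i. (- L 1 + fps_const (c (Suc i)) * K1) oo fps_X ^ Suc i)
            = fps_const \<kappa> * E"
  proof (rule fps_ext)
    fix n
    show "fps_nth (ell 1 + Sinf (\<lambda>i. (- L 1 + fps_const (c (Suc i)) * K1) oo fps_X ^ Suc i)) n
          = fps_nth (fps_const \<kappa> * E) n"
    proof (cases "n = 0")
      case True
      then show ?thesis unfolding E_def ell_def fps_mult_left_const_nth fps_add_nth fps_neg_nth Sinf_Xpow_nth
        by (simp add: L_def K1_nth)
    next
      case False
      then have n0: "0 < n" by simp
      have hdiv: "\<And>i. Suc i dvd n \<Longrightarrow> 0 < n div Suc i"
        using n0 by (simp add: dvd_imp_le div_greater_zero_iff)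
      have "fps_nth (ell 1 + Sinf (\<lambda>i. (- L 1 + fps_const (c (Suc i)) * K1) oo fps_X ^ Suc i)) n
          = (\<Sum>i\<in>{0..n}. if Suc i dvd n then c (Suc i) else 0)"
        unfolding ell_def Sinf_Xpow_nth fps_add_nth sum.distrib[symmetric]
        using hdiv by (intro sum.cong refl) (fastforce simp: K1_nth)
      also have "\<dots> = (\<Sum>i\<in>{0..n}. if Suc i dvd n then
             \<kappa> * (- ((q1*t1) ^ (n div Suc i) / of_nat (n div Suc i))
                   + - ((q2*t2) ^ (n div Suc i) / of_nat (n div Suc i))
                   + - (- ((q1*t2) ^ (n div Suc i) / of_nat (n div Suc i))
                   + - ((q2*t1) ^ (n div Suc i) / of_nat (n div Suc i)))) else 0)"
        unfolding divisor_reindex[OF n0, where f="\<lambda>m. \<kappa> * (- ((q1*t1) ^ m / of_nat m)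
                   + - ((q2*t2) ^ m / of_nat m)
                   + - (- ((q1*t2) ^ m / of_nat m)
                   + - ((q2*t1) ^ m / of_nat m)))"]
        by (intro sum.cong refl) (auto simp: c_def cc_def diff_divide_distrib add_divide_distrib power_mult_distrib algebra_simps)
      also have "\<dots> = fps_nth (fps_const \<kappa> * E) n"
        unfolding E_def ell_def fps_mult_left_const_nth fps_add_nth fps_neg_nth Sinf_Xpow_nth
        using hdiv
        by (auto simp: sum_distrib_left sum.distrib[symmetric] sum_negf[symmetric] L_def
             intro!: sum.cong)
      finally show ?thesis .
    qed
  qed
  have "fock_expect (V0 \<kappa> q1 q2 t1 t2) = fps_pow_gen (A / B) \<kappa>"
    using is_exp_uniq_G[OF eL[unfolded EE] eR] .
  then show ?thesis by (simp add: A_def B_def)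
qed

end
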